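(* Let $\delta\ge1$, let $G=(V,E,w)$ be a weighted graph, and let $\mathcal{R}$ be the set of constraints $\{i,j|k\}$, over all triples of distinct indices $i,j,k$, such that $w_{ij}>\delta^2\max\{w_{ik},w_{jk}\}$. If $T$ is any binary HC-tree for $V$ consistent with every constraint in $\mathcal{R}$, then $\rho_G(T)\le(\delta^2+1)\rho^*_G$.
   Context: Weights are symmetric, nonnegative, and $0$ on non-edges. An HC-tree for $V=\{v_1,\dots,v_n\}$ is a rooted tree with leaf set $V$. $T$ is consistent with $\{i,j|k\}$ if $\mathrm{LCA}(v_i,v_j)$ is a proper descendant of $\mathrm{LCA}(v_i,v_j,v_k)$ (relation $\{i,j|k\}$ holds in $T$); relation $\{i|j|k\}$ holds if $\mathrm{LCA}(v_i,v_j)=\mathrm{LCA}(v_j,v_k)=\mathrm{LCA}(v_i,v_j,v_k)$. Triplet cost $c_T(i,j,k)$: $w_{ik}+w_{jk}$ if $\{i,j|k\}$; $w_{ij}+w_{jk}$ if $\{i,k|j\}$; $w_{ij}+w_{ik}$ if $\{j,k|i\}$; $w_{ij}+w_{jk}+w_{ik}$ if $\{i|j|k\}$. $\mathrm{TC}_G(T)=\sum c_T(i,j,k)$ and $\mathrm{BC}(G)=\sum\min\{w_{ij}+w_{ik},w_{ij}+w_{jk},w_{ik}+w_{jk}\}$ over unordered triples of distinct indices; $\rho_G(T)=\mathrm{TC}_G(T)/\mathrm{BC}(G)$ (with $0/0=1$, $x/0=+\infty$ for $x>0$), $\rho^*_G=\min_T\rho_G(T)$ over all HC-trees. *)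

theory Defs
  imports "HOL-Analysis.Analysis" "HOL-Library.Sublist" "HOL-Library.Extended_Real"
begin

text \<open>Rooted trees with labelled leaves. Vertices v_1..v_n are represented by indices 0..n-1.\<close>
datatype 'a hctree = Leaf 'a | Node "'a hctree list"

function leaf_paths :: "'a hctree \<Rightarrow> ('a \<times> nat list) list" where
  "leaf_paths (Leaf a) = [(a, [])]"
| "leaf_paths (Node ts) =
     concat (map (\<lambda>(i,t). map (\<lambda>(a,p). (a, i # p)) (leaf_paths t)) (zip [0..<length ts] ts))"
  by pat_completeness auto
termination
  by (relation "Wellfounded.measure size") (auto dest!: set_zip_rightD simp: less_Suc_eq_le intro: size_list_estimation')

definition leaves :: "'a hctree \<Rightarrow> 'a list" where
  "leaves T = map fst (leaf_paths T)"

text \<open>Every internal node has at least one child (so leaves are exactly the Leaf nodes).\<close>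
fun inner_ok :: "'a hctree \<Rightarrow> bool" where
  "inner_ok (Leaf a) = True"
| "inner_ok (Node ts) = (ts \<noteq> [] \<and> (\<forall>t\<in>set ts. inner_ok t))"

fun binary :: "'a hctree \<Rightarrow> bool" where
  "binary (Leaf a) = True"
| "binary (Node ts) = (length ts = 2 \<and> (\<forall>t\<in>set ts. binary t))"

definition is_hctree :: "nat \<Rightarrow> nat hctree \<Rightarrow> bool" where
  "is_hctree n T \<longleftrightarrow> inner_ok T \<and> distinct (leaves T) \<and> set (leaves T) = {0..<n}"

definition lpath :: "'a hctree \<Rightarrow> 'a \<Rightarrow> nat list" where
  "lpath T a = the (map_of (leaf_paths T) a)"

text \<open>LCA of leaves, as a node position (longest common prefix of the leaf positions).\<close>
definition lca2 :: "'a hctree \<Rightarrow> 'a \<Rightarrow> 'a \<Rightarrow> nat list" where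
  "lca2 T a b = longest_common_prefix (lpath T a) (lpath T b)"

definition lca3 :: "'a hctree \<Rightarrow> 'a \<Rightarrow> 'a \<Rightarrow> 'a \<Rightarrow> nat list" where
  "lca3 T a b c = longest_common_prefix (lca2 T a b) (lpath T c)"

text \<open>Relation {i,j|k}: LCA(i,j) is a proper descendant of LCA(i,j,k).\<close>
definition rel_pair :: "'a hctree \<Rightarrow> 'a \<Rightarrow> 'a \<Rightarrow> 'a \<Rightarrow> bool" where
  "rel_pair T i j k \<longleftrightarrow> strict_prefix (lca3 T i j k) (lca2 T i j)"

definition rel_star :: "'a hctree \<Rightarrow> 'a \<Rightarrow> 'a \<Rightarrow> 'a \<Rightarrow> bool" where
  "rel_star T i j k \<longleftrightarrow> lca2 T i j = lca3 T i j k \<and> lca2 T j k = lca3 T i j k"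

definition triplet_cost :: "(nat \<Rightarrow> nat \<Rightarrow> real) \<Rightarrow> nat hctree \<Rightarrow> nat \<Rightarrow> nat \<Rightarrow> nat \<Rightarrow> real" where
  "triplet_cost w T i j k =
     (if rel_pair T i j k then w i k + w j k
      else if rel_pair T i k j then w i j + w j k
      else if rel_pair T j k i then w i j + w i k
      else if rel_star T i j k then w i j + w j k + w i k
      else 0)"

definition triples :: "nat \<Rightarrow> (nat \<times> nat \<times> nat) set" where
  "triples n = {(i,j,k). i < j \<and> j < k \<and> k < n}"

definition TC :: "nat \<Rightarrow> (nat \<Rightarrow> nat \<Rightarrow> real) \<Rightarrow> nat hctree \<Rightarrow> real" where
  "TC n w T = (\<Sum>(i,j,k)\<in>triples n. triplet_cost w T i j k)"

definition BC :: "nat \<Rightarrow> (nat \<Rightarrow> nat \<Rightarrow> real) \<Rightarrow> real" where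
  "BC n w = (\<Sum>(i,j,k)\<in>triples n. min (w i j + w i k) (min (w i j + w j k) (w i k + w j k)))"

definition rho :: "nat \<Rightarrow> (nat \<Rightarrow> nat \<Rightarrow> real) \<Rightarrow> nat hctree \<Rightarrow> ereal" where
  "rho n w T = (if BC n w = 0 then (if TC n w T = 0 then 1 else \<infinity>)
                else ereal (TC n w T / BC n w))"

definition rho_star :: "nat \<Rightarrow> (nat \<Rightarrow> nat \<Rightarrow> real) \<Rightarrow> ereal" where
  "rho_star n w = (INF T\<in>{T. is_hctree n T}. rho n w T)"

definition weighted_graph :: "nat \<Rightarrow> (nat \<Rightarrow> nat \<Rightarrow> real) \<Rightarrow> bool" where
  "weighted_graph n w \<longleftrightarrow> (\<forall>i<n. \<forall>j<n. w i j = w j i \<and> w i j \<ge> 0)"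

end

theory Submission imports Defs begin

lemma lcp_iff: "prefix p (longest_common_prefix x y) \<longleftrightarrow> prefix p x \<and> prefix p y"
  by (meson longest_common_prefix_max_prefix longest_common_prefix_prefix1 longest_common_prefix_prefix2 prefix_order.trans)

lemma prefix_ext: "(\<And>p. prefix p x \<longleftrightarrow> prefix p y) \<Longrightarrow> x = y"
  by (meson prefix_order.antisym prefix_order.refl)

lemma lcp_swap: "longest_common_prefix (longest_common_prefix a b) c = longest_common_prefix (longest_common_prefix a c) b"
  by (rule prefix_ext) (auto simp: lcp_iff)

lemma lcp_rot: "longest_common_prefix (longest_common_prefix a b) c = longest_common_prefix (longest_common_prefix b c) a"
  by (rule prefix_ext) (auto simp: lcp_iff)

lemma lcp_L: "longest_common_prefix (longest_common_prefix a b) c = longest_common_prefix (longest_common_prefix a b) (longest_common_prefix a c)"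
  by (rule prefix_ext) (auto simp: lcp_iff)

lemma lcp_prefix1: "prefix x y \<Longrightarrow> longest_common_prefix x y = x"
  by (rule prefix_ext) (metis lcp_iff prefix_order.trans prefix_order.refl)

lemma lcp_prefix2: "prefix y x \<Longrightarrow> longest_common_prefix x y = y"
  by (rule prefix_ext) (metis lcp_iff prefix_order.trans prefix_order.refl)

lemma excl_aux:
  assumes "strict_prefix (longest_common_prefix (longest_common_prefix a b) c) (longest_common_prefix a b)"
      and "strict_prefix (longest_common_prefix (longest_common_prefix a b) c) (longest_common_prefix a c)"
  shows False
proof -
  let ?A = "longest_common_prefix a b" and ?B = "longest_common_prefix a c"
  have "prefix ?A a" "prefix ?B a" by (simp_all add: longest_common_prefix_prefix1)
  hence "prefix ?A ?B \<or> prefix ?B ?A" using prefix_same_cases by blast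
  moreover have "longest_common_prefix ?A c = longest_common_prefix ?A ?B" by (rule lcp_L)
  moreover have "prefix ?A ?B \<Longrightarrow> longest_common_prefix ?A ?B = ?A" by (rule lcp_prefix1)
  moreover have "prefix ?B ?A \<Longrightarrow> longest_common_prefix ?A ?B = ?B" by (rule lcp_prefix2)
  ultimately show False using assms by auto
qed

lemma cost_arith:
  fixes x y z d :: real
  assumes "x \<ge> 0" "y \<ge> 0" "z \<ge> 0" "d \<ge> 1"
    and "\<not>(P1 \<and> P2)" "\<not>(P1 \<and> P3)" "\<not>(P2 \<and> P3)" "\<not>P1 \<and> \<not>P2 \<and> \<not>P3 \<longrightarrow> S"
    and "x > d * max y z \<longrightarrow> P1" "y > d * max x z \<longrightarrow> P2" "z > d * max x y \<longrightarrow> P3"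
    and c: "c = (if P1 then y + z else if P2 then x + z else if P3 then x + y else if S then x + y + z else 0)"
  shows "min (x + y) (min (x + z) (y + z)) \<le> c \<and> c \<le> (d + 1) * min (x + y) (min (x + z) (y + z))"
proof -
  have m1: "d * max y z \<le> d*y + d*z" "d * max x z \<le> d*x + d*z" "d * max x y \<le> d*x + d*y"
    using assms by (auto simp: max_def algebra_simps)
  have m2: "d*x \<ge> x" "d*y \<ge> y" "d*z \<ge> z" using assms
    by (metis mult_right_mono mult_1)+
  show ?thesis using assms m1 m2 unfolding min_def max_def
    by (auto split: if_splits simp: algebra_simps)
qed

lemma lcp_comm: "longest_common_prefix a b = longest_common_prefix b a"
  by (rule prefix_ext) (auto simp: lcp_iff)

lemma tri_facts:
  fixes T :: "'a hctree"
  shows "\<not> (rel_pair T i j k \<and> rel_pair T i k j)"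
    "\<not> (rel_pair T i j k \<and> rel_pair T j k i)"
    "\<not> (rel_pair T i k j \<and> rel_pair T j k i)"
    "\<not> rel_pair T i j k \<and> \<not> rel_pair T i k j \<and> \<not> rel_pair T j k i \<longrightarrow> rel_star T i j k"
proof -
  define a where "a = lpath T i"
  define b where "b = lpath T j"
  define c where "c = lpath T k"
  define L where "L = longest_common_prefix (longest_common_prefix a b) c"
  have e1: "rel_pair T i j k = strict_prefix L (longest_common_prefix a b)"
    unfolding rel_pair_def lca3_def lca2_def L_def a_def b_def c_def by simp
  have e2: "rel_pair T i k j = strict_prefix L (longest_common_prefix a c)"
    unfolding rel_pair_def lca3_def lca2_def L_def a_def b_def c_def by (simp add: lcp_swap)
  have e3: "rel_pair T j k i = strict_prefix L (longest_common_prefix b c)"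
    unfolding rel_pair_def lca3_def lca2_def L_def a_def b_def c_def by (metis lcp_rot)
  have e4: "rel_star T i j k = (longest_common_prefix a b = L \<and> longest_common_prefix b c = L)"
    unfolding rel_star_def lca3_def lca2_def L_def a_def b_def c_def by simp
  have x1: "\<not> (strict_prefix L (longest_common_prefix a b) \<and> strict_prefix L (longest_common_prefix a c))"
    using excl_aux[of a b c] L_def by blast
  have x2: "\<not> (strict_prefix L (longest_common_prefix a b) \<and> strict_prefix L (longest_common_prefix b c))"
    using excl_aux[of b a c] L_def lcp_comm[of a b] by metis
  have x3: "\<not> (strict_prefix L (longest_common_prefix a c) \<and> strict_prefix L (longest_common_prefix b c))"
    using excl_aux[of c a b] L_def lcp_comm[of c a] lcp_comm[of c b] lcp_swap[of a b c] lcp_rot[of c a b] by metis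
  have p1: "prefix L (longest_common_prefix a b)"
    unfolding L_def by (rule longest_common_prefix_prefix1)
  have p3: "prefix L (longest_common_prefix b c)"
    unfolding L_def lcp_rot[of a b c] by (rule longest_common_prefix_prefix1)
  show "\<not> (rel_pair T i j k \<and> rel_pair T i k j)" using x1 e1 e2 by simp
  show "\<not> (rel_pair T i j k \<and> rel_pair T j k i)" using x2 e1 e3 by simp
  show "\<not> (rel_pair T i k j \<and> rel_pair T j k i)" using x3 e2 e3 by simp
  show "\<not> rel_pair T i j k \<and> \<not> rel_pair T i k j \<and> \<not> rel_pair T j k i \<longrightarrow> rel_star T i j k"
    using e1 e3 e4 p1 p3 by (auto simp: strict_prefix_def)
qed

lemma tri_bounds:
  fixes w :: "nat \<Rightarrow> nat \<Rightarrow> real" and T :: "nat hctree" and d :: real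
  assumes "d \<ge> 1" "w i j \<ge> 0" "w i k \<ge> 0" "w j k \<ge> 0"
    and "w i j > d * max (w i k) (w j k) \<longrightarrow> rel_pair T i j k"
    and "w i k > d * max (w i j) (w j k) \<longrightarrow> rel_pair T i k j"
    and "w j k > d * max (w i j) (w i k) \<longrightarrow> rel_pair T j k i"
  shows "min (w i j + w i k) (min (w i j + w j k) (w i k + w j k)) \<le> triplet_cost w T i j k \<and>
         triplet_cost w T i j k \<le> (d + 1) * min (w i j + w i k) (min (w i j + w j k) (w i k + w j k))"
  by (rule cost_arith[OF assms(2,3,4,1) tri_facts assms(5,6,7)])
     (simp add: triplet_cost_def algebra_simps)

lemma cost_lower:
  fixes w :: "nat \<Rightarrow> nat \<Rightarrow> real"
  assumes "w i j \<ge> 0" "w i k \<ge> 0" "w j k \<ge> 0"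
  shows "min (w i j + w i k) (min (w i j + w j k) (w i k + w j k)) \<le> triplet_cost w T i j k"
proof -
  have "\<not> rel_pair T i j k \<and> \<not> rel_pair T i k j \<and> \<not> rel_pair T j k i \<longrightarrow> rel_star T i j k"
    by (rule tri_facts)
  then show ?thesis using assms unfolding triplet_cost_def by (auto simp: min_def)
qed

theorem lemma7:
  fixes n :: nat and w :: "nat \<Rightarrow> nat \<Rightarrow> real" and \<delta> :: real and T :: "nat hctree"
  assumes "\<delta> \<ge> 1"
    and "weighted_graph n w"
    and "is_hctree n T" and "binary T"
    and "\<forall>i<n. \<forall>j<n. \<forall>k<n. i \<noteq> j \<and> i \<noteq> k \<and> j \<noteq> k \<and>
            w i j > \<delta>\<^sup>2 * max (w i k) (w j k) \<longrightarrow> rel_pair T i j k"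
  shows "rho n w T \<le> ereal (\<delta>\<^sup>2 + 1) * rho_star n w"
proof -
  let ?m = "\<lambda>i j k. min (w i j + w i k) (min (w i j + w j k) (w i k + w j k))"
  have fin: "finite (triples n)"
    by (rule finite_subset[of _ "{..<n} \<times> {..<n} \<times> {..<n}"]) (auto simp: triples_def)
  have d1: "\<delta>\<^sup>2 \<ge> 1" using assms(1) by (simp add: one_le_power)
  have wg: "\<And>i j. i < n \<Longrightarrow> j < n \<Longrightarrow> w i j = w j i \<and> w i j \<ge> 0"
    using assms(2) unfolding weighted_graph_def by blast
  have upper: "triplet_cost w T i j k \<le> (\<delta>\<^sup>2 + 1) * ?m i j k" if "(i,j,k) \<in> triples n" for i j k
  proof -
    from that have ijk: "i < j" "j < k" "k < n" by (auto simp: triples_def)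
    have s: "w j i = w i j" "w k i = w i k" "w k j = w j k" using wg ijk by auto
    have c1: "w i j > \<delta>\<^sup>2 * max (w i k) (w j k) \<longrightarrow> rel_pair T i j k"
      using assms(5)[rule_format, of i j k] ijk by auto
    have c2: "w i k > \<delta>\<^sup>2 * max (w i j) (w j k) \<longrightarrow> rel_pair T i k j"
      using assms(5)[rule_format, of i k j] ijk s by auto
    have c3: "w j k > \<delta>\<^sup>2 * max (w i j) (w i k) \<longrightarrow> rel_pair T j k i"
      using assms(5)[rule_format, of j k i] ijk s by auto
    show ?thesis using tri_bounds[OF d1 _ _ _ c1 c2 c3] wg ijk by auto
  qed
  have lower: "?m i j k \<le> triplet_cost w U i j k" if "(i,j,k) \<in> triples n" for i j k U
  proof -
    from that have ijk: "i < j" "j < k" "k < n" by (auto simp: triples_def)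
    show ?thesis by (rule cost_lower) (use wg ijk in auto)
  qed
  have TCu: "TC n w T \<le> (\<delta>\<^sup>2 + 1) * BC n w"
    unfolding TC_def BC_def sum_distrib_left
    by (rule sum_mono) (use upper in auto)
  have TCl: "BC n w \<le> TC n w U" for U
    unfolding TC_def BC_def
    by (rule sum_mono) (use lower in auto)
  have BC0: "BC n w \<ge> 0"
    unfolding BC_def
  proof (rule sum_nonneg, clarify)
    fix i j k assume "(i,j,k) \<in> triples n"
    then have "i < n" "j < n" "k < n" by (auto simp: triples_def)
    then show "0 \<le> min (w i j + w i k) (min (w i j + w j k) (w i k + w j k))"
      using wg by (simp add: add_nonneg_nonneg)
  qed
  have rho1: "rho n w U \<ge> 1" for U
    using TCl[of U] BC0 by (auto simp: rho_def)
  have rs: "rho_star n w \<ge> 1"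
    unfolding rho_star_def by (rule INF_greatest) (rule rho1)
  have rT: "rho n w T \<le> ereal (\<delta>\<^sup>2 + 1)"
  proof (cases "BC n w = 0")
    case True
    then have "TC n w T = 0" using TCu TCl[of T] by auto
    then show ?thesis using True d1 by (simp add: rho_def)
  next
    case False
    then have "BC n w > 0" using BC0 by auto
    then have "TC n w T / BC n w \<le> \<delta>\<^sup>2 + 1" using TCu by (simp add: divide_le_eq)
    then show ?thesis using False by (simp add: rho_def)
  qed
  also have "ereal (\<delta>\<^sup>2 + 1) = ereal (\<delta>\<^sup>2 + 1) * 1" by simp
  also have "\<dots> \<le> ereal (\<delta>\<^sup>2 + 1) * rho_star n w"
    using rs d1 by (intro ereal_mult_left_mono) auto
  finally show ?thesis .
qed

end
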